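(* Let $T=(V,E)$ be a tree on $n$ vertices, let $f=\{i,j\}$ be a pair of vertices with $d_{i,j}=d>1$, let $B=E\cup\{f\}$, and let $N=\mathrm{Min4PC}_T[B,B]$. Then $N$ has $n-1$ negative eigenvalues and exactly one positive eigenvalue.
   Context: $d_{i,j}$ is the distance in $T$ between vertices $i,j$; $\mathcal{V}_2$ is the set of 2-element subsets of $V$ (edges regarded as elements of $\mathcal{V}_2$). $\mathrm{Min4PC}_T$ is the $\binom n2\times\binom n2$ matrix indexed by $\mathcal{V}_2$ whose entry in row $\{i,j\}$, column $\{k,l\}$ is $\min\{d_{i,l}+d_{j,k},\ d_{i,k}+d_{j,l},\ d_{i,j}+d_{k,l}\}$. $M[B,B]$ denotes the principal submatrix with rows and columns indexed by $B$. *)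

theory Defs
  imports "Jordan_Normal_Form.Char_Poly" "HOL-Computational_Algebra.Polynomial"
begin

definition simple_graph :: "'a set \<Rightarrow> 'a set set \<Rightarrow> bool" where
  "simple_graph V E \<longleftrightarrow> finite V \<and> (\<forall>e\<in>E. e \<subseteq> V \<and> card e = 2)"

fun is_walk :: "'a set set \<Rightarrow> 'a list \<Rightarrow> bool" where
  "is_walk E [] = False"
| "is_walk E [x] = True"
| "is_walk E (x # y # xs) = ({x, y} \<in> E \<and> is_walk E (y # xs))"

definition walk_between :: "'a set set \<Rightarrow> 'a \<Rightarrow> 'a \<Rightarrow> 'a list \<Rightarrow> bool" where
  "walk_between E u v xs \<longleftrightarrow> is_walk E xs \<and> hd xs = u \<and> last xs = v"

definition connected_graph :: "'a set \<Rightarrow> 'a set set \<Rightarrow> bool" where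
  "connected_graph V E \<longleftrightarrow> (\<forall>u\<in>V. \<forall>v\<in>V. \<exists>xs. walk_between E u v xs \<and> set xs \<subseteq> V)"

definition is_tree :: "'a set \<Rightarrow> 'a set set \<Rightarrow> bool" where
  "is_tree V E \<longleftrightarrow> simple_graph V E \<and> V \<noteq> {} \<and> connected_graph V E \<and> card E = card V - 1"

definition gdist :: "'a set set \<Rightarrow> 'a \<Rightarrow> 'a \<Rightarrow> nat" where
  "gdist E u v = (LEAST k. \<exists>xs. walk_between E u v xs \<and> length xs = Suc k)"

text \<open>Entry of Min4PC_T in row {i,j}, column {k,l}; independent of the choice of
  orderings of i,j and of k,l by symmetry.\<close>

definition min4pc_entry :: "'a set set \<Rightarrow> 'a set \<Rightarrow> 'a set \<Rightarrow> real" where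
  "min4pc_entry E P Q =
     (let (i, j) = (SOME (i, j). P = {i, j});
          (k, l) = (SOME (k, l). Q = {k, l});
          d = (\<lambda>x y. real (gdist E x y))
      in min (d i l + d j k) (min (d i k + d j l) (d i j + d k l)))"

text \<open>Principal submatrix Min4PC_T[B,B], with B listed via an enumeration
  idx : {0..<m} -> B.\<close>

definition min4pc_submatrix :: "'a set set \<Rightarrow> nat \<Rightarrow> (nat \<Rightarrow> 'a set) \<Rightarrow> real mat" where
  "min4pc_submatrix E m idx = mat m m (\<lambda>(a, b). min4pc_entry E (idx a) (idx b))"

definition num_neg_eigs :: "real mat \<Rightarrow> nat" where
  "num_neg_eigs A = (\<Sum>a\<in>{a. a < 0 \<and> poly (char_poly A) a = 0}. order a (char_poly A))"

definition num_pos_eigs :: "real mat \<Rightarrow> nat" where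
  "num_pos_eigs A = (\<Sum>a\<in>{a. a > 0 \<and> poly (char_poly A) a = 0}. order a (char_poly A))"

end

theory Submission
  imports Defs
begin


lemma walk_nonempty: "is_walk E xs \<Longrightarrow> xs \<noteq> []"
  by (cases xs) auto

lemma walk_append_iff: "is_walk E (xs @ y # ys) \<longleftrightarrow> is_walk E (xs @ [y]) \<and> is_walk E (y # ys)"
proof (induction xs)
  case Nil
  then show ?case by simp
next
  case (Cons x xs)
  then show ?case by (cases xs) auto
qed

lemma walk_rev: "is_walk E xs \<Longrightarrow> is_walk E (rev xs)"
proof (induction xs rule: is_walk.induct)
  case (3 E x y xs)
  then have "is_walk E (rev xs @ [y])" and "{x,y} \<in> E" by simp_all
  moreover have "{y,x} \<in> E" using \<open>{x,y} \<in> E\<close> by (simp add: insert_commute)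
  ultimately show ?case using walk_append_iff[of E "rev xs" y "[x]"] by simp
qed auto

lemma walk_concat:
  "is_walk E xs \<Longrightarrow> is_walk E ys \<Longrightarrow> last xs = hd ys \<Longrightarrow> is_walk E (xs @ tl ys)"
proof (induction xs rule: is_walk.induct)
  case (2 E x)
  then have "ys \<noteq> []" using walk_nonempty by blast
  then have "x # tl ys = ys" using 2 by (metis last_ConsL list.collapse)
  then show ?case using 2 by simp
qed auto

definition Wk :: "'a set set \<Rightarrow> 'a \<Rightarrow> 'a \<Rightarrow> nat \<Rightarrow> bool" where
  "Wk E u v k \<longleftrightarrow> (\<exists>xs. walk_between E u v xs \<and> length xs = Suc k)"

lemma gdist_le: "Wk E u v k \<Longrightarrow> gdist E u v \<le> k"
  unfolding gdist_def Wk_def by (rule Least_le) auto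

lemma gdist_Wk: "Wk E u v k \<Longrightarrow> Wk E u v (gdist E u v)"
  unfolding gdist_def Wk_def by (rule LeastI) auto

lemma Wk_refl: "Wk E u u 0"
  unfolding Wk_def walk_between_def by (rule exI[of _ "[u]"]) simp

lemma Wk_sym: "Wk E u v k \<Longrightarrow> Wk E v u k"
  unfolding Wk_def walk_between_def
proof (elim exE conjE)
  fix xs assume "is_walk E xs" "hd xs = u" "last xs = v" "length xs = Suc k"
  moreover have "xs \<noteq> []" using walk_nonempty \<open>is_walk E xs\<close> by blast
  ultimately show "\<exists>xs. (is_walk E xs \<and> hd xs = v \<and> last xs = u) \<and> length xs = Suc k"
    by (intro exI[of _ "rev xs"]) (simp add: walk_rev hd_rev last_rev)
qed

lemma gdist_sym: "gdist E u v = gdist E v u"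
proof -
  have "\<And>k. Wk E u v k = Wk E v u k" using Wk_sym[of E u v] Wk_sym[of E v u] by blast
  then show ?thesis unfolding gdist_def Wk_def[symmetric] by simp
qed

lemma Wk_trans:
  assumes "Wk E u v k" "Wk E v w l" shows "Wk E u w (k + l)"
proof -
  obtain xs where xs: "is_walk E xs" "hd xs = u" "last xs = v" "length xs = Suc k"
    using assms(1) unfolding Wk_def walk_between_def by blast
  obtain ys where ys: "is_walk E ys" "hd ys = v" "last ys = w" "length ys = Suc l"
    using assms(2) unfolding Wk_def walk_between_def by blast
  have ne: "xs \<noteq> []" "ys \<noteq> []" using xs ys walk_nonempty by blast+
  have "is_walk E (xs @ tl ys)" using walk_concat xs ys by metis
  moreover have "hd (xs @ tl ys) = u" using xs ne by simp
  moreover have "last (xs @ tl ys) = w"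
  proof (cases "tl ys = []")
    case True
    then have "ys = [hd ys]" using ne by (metis list.collapse)
    then show ?thesis using xs ys True by (metis append.right_neutral last_ConsL)
  next
    case False
    then show ?thesis using ys ne by (simp add: last_tl)
  qed
  moreover have "length (xs @ tl ys) = Suc (k + l)" using xs ys by simp
  ultimately show ?thesis unfolding Wk_def walk_between_def by blast
qed

lemma Wk_edge: "{u,v} \<in> E \<Longrightarrow> Wk E u v 1"
  unfolding Wk_def walk_between_def by (rule exI[of _ "[u,v]"]) simp

lemma Wk_0: "Wk E u v 0 \<Longrightarrow> u = v"
  unfolding Wk_def walk_between_def by (auto simp: length_Suc_conv)

lemma Wk_Suc: "Wk E u v (Suc k) \<Longrightarrow> \<exists>w. {u,w} \<in> E \<and> Wk E w v k"
proof -
  assume "Wk E u v (Suc k)"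
  then obtain xs where xs: "is_walk E xs" "hd xs = u" "last xs = v" "length xs = Suc (Suc k)"
    unfolding Wk_def walk_between_def by blast
  then obtain w ys where "xs = u # w # ys" by (auto simp: length_Suc_conv)
  then show ?thesis using xs unfolding Wk_def walk_between_def
    by (intro exI[of _ w]) (auto intro!: exI[of _ "w # ys"])
qed


locale tree_ctx =
  fixes V :: "'a set" and E :: "'a set set"
  assumes tree: "is_tree V E"
begin

abbreviation dist where "dist u v \<equiv> gdist E u v"

lemma finV: "finite V" using tree unfolding is_tree_def simple_graph_def by blast

lemma edge_sub: "e \<in> E \<Longrightarrow> e \<subseteq> V" and edge_card: "e \<in> E \<Longrightarrow> card e = 2"
  using tree unfolding is_tree_def simple_graph_def by blast+

lemma edge_in: assumes "{u,w} \<in> E" shows "u \<in> V" "w \<in> V" "u \<noteq> w"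
proof -
  show "u \<in> V" "w \<in> V" using edge_sub[OF assms] by auto
  show "u \<noteq> w" using edge_card[OF assms] by auto
qed

lemma edge_obtain: assumes "e \<in> E" obtains a b where "e = {a,b}" "a \<noteq> b" "{a,b} \<in> E"
proof -
  obtain a b where "e = {a,b}" "a \<noteq> b" using edge_card[OF assms] card_2_iff[of e] by blast
  then show ?thesis using that assms by blast
qed

lemma finE: "finite E"
proof -
  have "E \<subseteq> Pow V" using edge_sub by auto
  then show ?thesis using finV by (meson finite_Pow_iff finite_subset)
qed

lemma cardE: "card E = card V - 1" using tree unfolding is_tree_def by blast

lemma Vne: "V \<noteq> {}" using tree unfolding is_tree_def by blast

lemma conn: assumes "u \<in> V" "v \<in> V" shows "\<exists>k. Wk E u v k"
proof -
  have "connected_graph V E" using tree unfolding is_tree_def by blast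
  then obtain xs where "walk_between E u v xs" using assms unfolding connected_graph_def by blast
  moreover have "xs \<noteq> []" using calculation walk_nonempty unfolding walk_between_def by blast
  then have "walk_between E u v xs \<and> length xs = Suc (length xs - 1)" using calculation by simp
  then show ?thesis unfolding Wk_def by blast
qed

lemma d_W: assumes "u \<in> V" "v \<in> V" shows "Wk E u v (dist u v)"
proof -
  obtain k where "Wk E u v k" using conn[OF assms] by blast
  then show ?thesis by (rule gdist_Wk)
qed

lemma d_refl[simp]: "dist u u = 0"
  using gdist_le[OF Wk_refl] by simp

lemma d_0: "u \<in> V \<Longrightarrow> v \<in> V \<Longrightarrow> dist u v = 0 \<Longrightarrow> u = v"
proof -
  assume "u \<in> V" "v \<in> V" "dist u v = 0"
  then have "Wk E u v 0" using d_W[of u v] by simp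
  then show "u = v" by (rule Wk_0)
qed

lemma d_tri: "u \<in> V \<Longrightarrow> v \<in> V \<Longrightarrow> w \<in> V \<Longrightarrow> dist u w \<le> dist u v + dist v w"
proof -
  assume a: "u \<in> V" "v \<in> V" "w \<in> V"
  have "Wk E u w (dist u v + dist v w)" by (rule Wk_trans[OF d_W[OF a(1,2)] d_W[OF a(2,3)]])
  then show ?thesis by (rule gdist_le)
qed

lemma d_edge: "{u,v} \<in> E \<Longrightarrow> dist u v = 1"
proof -
  assume e: "{u,v} \<in> E"
  have "dist u v \<le> 1" using gdist_le[OF Wk_edge[OF e]] .
  moreover have "dist u v \<noteq> 0" using d_0[OF edge_in(1,2)[OF e]] edge_in(3)[OF e] by blast
  ultimately show ?thesis by simp
qed

lemma d_step:
  assumes "u \<in> V" "v \<in> V" "dist u v = Suc k"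
  shows "\<exists>w. {u,w} \<in> E \<and> dist w v = k"
proof -
  have "Wk E u v (Suc k)" using d_W[OF assms(1,2)] assms(3) by simp
  then obtain w where w: "{u,w} \<in> E" "Wk E w v k" using Wk_Suc[of E u v k] by blast
  have le: "dist w v \<le> k" using gdist_le[OF w(2)] .
  have tr: "dist u v \<le> dist u w + dist w v" using d_tri[OF assms(1) edge_in(2)[OF w(1)] assms(2)] .
  have "dist u w = 1" using d_edge[OF w(1)] .
  then have "dist w v = k" using le tr assms(3) by simp
  then show ?thesis using w(1) by (intro exI[of _ w]) simp
qed

definition par :: "'a \<Rightarrow> 'a \<Rightarrow> 'a" where
  "par r v = (SOME w. {v,w} \<in> E \<and> Suc (dist w r) = dist v r)"

lemma par_ok:
  assumes "r \<in> V" "v \<in> V" "v \<noteq> r"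
  shows "{v, par r v} \<in> E" "Suc (dist (par r v) r) = dist v r"
proof -
  have "dist v r \<noteq> 0" using d_0[OF assms(2,1)] assms(3) by blast
  then obtain k where "dist v r = Suc k" by (cases "dist v r") auto
  then obtain w where "{v,w} \<in> E" "dist w r = k" using d_step[OF assms(2,1)] by blast
  then have "\<exists>w. {v,w} \<in> E \<and> Suc (dist w r) = dist v r" using \<open>dist v r = Suc k\<close> by auto
  then have "{v, par r v} \<in> E \<and> Suc (dist (par r v) r) = dist v r"
    unfolding par_def by (rule someI_ex[of "\<lambda>w. {v,w} \<in> E \<and> Suc (dist w r) = dist v r"])
  then show "{v, par r v} \<in> E" "Suc (dist (par r v) r) = dist v r" by auto
qed

definition gm :: "'a \<Rightarrow> 'a \<Rightarrow> 'a set" where "gm r v = {v, par r v}"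

lemma gm_inj: assumes r: "r \<in> V" shows "inj_on (gm r) (V - {r})"
proof (rule inj_onI)
  fix v w assume v: "v \<in> V - {r}" and w: "w \<in> V - {r}" and eq: "gm r v = gm r w"
  show "v = w"
  proof (rule ccontr)
    assume "v \<noteq> w"
    then have "v = par r w" "w = par r v" using eq unfolding gm_def by (auto simp: doubleton_eq_iff)
    moreover have "Suc (dist (par r v) r) = dist v r" "Suc (dist (par r w) r) = dist w r"
      using par_ok(2)[OF r] v w by auto
    ultimately show False by simp
  qed
qed

lemma gm_onto: assumes r: "r \<in> V" shows "gm r ` (V - {r}) = E"
proof -
  have sub: "gm r ` (V - {r}) \<subseteq> E" using par_ok[OF r] unfolding gm_def by auto
  have "card (gm r ` (V - {r})) = card (V - {r})" using card_image[OF gm_inj[OF r]] .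
  also have "\<dots> = card E" using cardE r finV by simp
  finally show ?thesis using card_subset_eq[OF finE sub] by simp
qed

lemma edge_level:
  assumes r: "r \<in> V" and e: "{x,y} \<in> E"
  shows "dist x r = Suc (dist y r) \<or> dist y r = Suc (dist x r)"
proof -
  obtain v where v: "v \<in> V - {r}" "{x,y} = gm r v" using gm_onto[OF r] e by blast
  then have "(x = v \<and> y = par r v) \<or> (x = par r v \<and> y = v)" unfolding gm_def by (auto simp: doubleton_eq_iff)
  then show ?thesis using par_ok(2)[OF r] v(1) by auto
qed

lemma par_unique:
  assumes r: "r \<in> V" and e: "{v,u} \<in> E" and d: "Suc (dist u r) = dist v r"
  shows "u = par r v"
proof -
  obtain w where w: "w \<in> V - {r}" "{v,u} = gm r w" using gm_onto[OF r] e by blast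
  then have "(v = w \<and> u = par r w) \<or> (v = par r w \<and> u = w)" unfolding gm_def by (auto simp: doubleton_eq_iff)
  moreover have "\<not> (v = par r w \<and> u = w)"
  proof
    assume "v = par r w \<and> u = w"
    then have "Suc (dist v r) = dist u r" using par_ok(2)[OF r] w(1) by auto
    then show False using d by simp
  qed
  ultimately show ?thesis by blast
qed

lemma parity:
  assumes r: "r \<in> V"
  shows "x \<in> V \<Longrightarrow> y \<in> V \<Longrightarrow> even (dist x y + dist x r + dist y r)"
proof (induction "dist x y" arbitrary: x)
  case 0
  then have "x = y" using d_0[of x y] by simp
  then show ?case by simp
next
  case (Suc k)
  obtain w where w: "{x,w} \<in> E" "dist w y = k" using d_step[OF Suc.prems(1,2) Suc.hyps(2)[symmetric]] by blast
  have wV: "w \<in> V" using edge_in[OF w(1)] by simp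
  have "even (dist w y + dist w r + dist y r)" using Suc.hyps(1)[of w] w(2) wV Suc.prems by simp
  moreover have "dist x r = Suc (dist w r) \<or> dist w r = Suc (dist x r)" using edge_level[OF r w(1)] .
  moreover have xy: "dist x y = Suc (dist w y)" using w(2) Suc.hyps(2) by simp
  ultimately consider "even (dist w y + dist w r + dist y r)" "dist x r = Suc (dist w r)"
    | "even (dist w y + dist w r + dist y r)" "dist w r = Suc (dist x r)" by blast
  then show ?case
  proof cases
    case 1
    then have "dist x y + dist x r + dist y r = (dist w y + dist w r + dist y r) + 2" using xy by simp
    then show ?thesis using 1(1) by simp
  next
    case 2
    then have "dist x y + dist x r + dist y r = dist w y + dist w r + dist y r" using xy by simp
    then show ?thesis using 2(1) by simp
  qed
qed

end


definition Fm :: "'a set set \<Rightarrow> 'a \<Rightarrow> 'a \<Rightarrow> 'a \<Rightarrow> 'a \<Rightarrow> nat" where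
  "Fm E a b c e = min (gdist E a e + gdist E b c) (min (gdist E a c + gdist E b e) (gdist E a b + gdist E c e))"

lemma Fm_swap1: "Fm E b a c e = Fm E a b c e"
  unfolding Fm_def by (simp add: gdist_sym[of E b a] add.commute min.commute min.left_commute)

lemma Fm_swap2: "Fm E a b e c = Fm E a b c e"
  unfolding Fm_def by (simp add: gdist_sym[of E e c] add.commute min.commute min.left_commute)

lemma Fm_comm: "Fm E c e a b = Fm E a b c e"
  unfolding Fm_def
  by (simp add: gdist_sym[of E c b] gdist_sym[of E e a] gdist_sym[of E c a] gdist_sym[of E e b]
      add.commute min.commute min.left_commute)

lemma some_pair:
  assumes "P = {a,b}"
  obtains "(SOME (x,y). P = {x,y}) = (a,b)" | "(SOME (x,y). P = {x,y}) = (b,a)"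
proof -
  obtain x y where xy: "(SOME (x,y). P = {x,y}) = (x,y)" by (cases "SOME (x,y). P = {x,y}") auto
  have "(\<lambda>(x,y). P = {x,y}) (SOME p. (\<lambda>(x,y). P = {x,y}) p)"
    by (rule someI[of _ "(a,b)"]) (simp add: assms)
  then have "P = {x,y}" using xy by simp
  then have "(x = a \<and> y = b) \<or> (x = b \<and> y = a)" using assms by (auto simp: doubleton_eq_iff)
  then show ?thesis using that xy by auto
qed

lemma ent_pair: "min4pc_entry E {a,b} {c,e} = real (Fm E a b c e)"
proof -
  have gen: "min4pc_entry E {a,b} {c,e} = real (Fm E x y z w)"
    if "(SOME (x,y). {a,b} = {x,y}) = (x,y)" "(SOME (x,y). {c,e} = {x,y}) = (z,w)" for x y z w
    unfolding min4pc_entry_def Fm_def Let_def using that by (simp add: min_def)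
  show ?thesis
  proof (rule some_pair[of "{a,b}" a b]; rule some_pair[of "{c,e}" c e])
    assume "(SOME (x,y). {a,b} = {x,y}) = (a,b)" "(SOME (x,y). {c,e} = {x,y}) = (c,e)"
    then show ?thesis using gen by blast
  next
    assume "(SOME (x,y). {a,b} = {x,y}) = (a,b)" "(SOME (x,y). {c,e} = {x,y}) = (e,c)"
    then show ?thesis using gen[of a b e c] Fm_swap2[of E a b c e] by simp
  next
    assume "(SOME (x,y). {a,b} = {x,y}) = (b,a)" "(SOME (x,y). {c,e} = {x,y}) = (c,e)"
    then show ?thesis using gen[of b a c e] Fm_swap1[of E a b c e] by simp
  next
    assume "(SOME (x,y). {a,b} = {x,y}) = (b,a)" "(SOME (x,y). {c,e} = {x,y}) = (e,c)"
    then show ?thesis using gen[of b a e c] Fm_swap1[of E a b e c] Fm_swap2[of E a b c e] by simp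
  qed auto
qed


lemma ev4: "even ((s1::nat) + ar + gr) \<Longrightarrow> even (s2 + br + cr) \<Longrightarrow> (ar = Suc br \<or> br = Suc ar) \<Longrightarrow> (cr = Suc gr \<or> gr = Suc cr) \<Longrightarrow> even (s1 + s2)"
  by presburger

lemma ev3: "even ((s::nat) + D + br) \<Longrightarrow> (ar = Suc br \<or> br = Suc ar) \<Longrightarrow> odd (s + ar + D)"
  by presburger

context tree_ctx
begin

lemma ent_diag: assumes "e \<in> E" shows "min4pc_entry E e e = 0"
proof -
  obtain a b where e: "e = {a,b}" using edge_obtain[OF assms] by metis
  show ?thesis unfolding e ent_pair Fm_def by simp
qed

lemma ent_edges:
  assumes e: "e \<in> E" and e': "e' \<in> E" and ne: "e \<noteq> e'"
  shows "min4pc_entry E e e' = 2"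
proof -
  obtain a b where ab: "e = {a,b}" "a \<noteq> b" "{a,b} \<in> E" using edge_obtain[OF e] by metis
  obtain c g where cg: "e' = {c,g}" "c \<noteq> g" "{c,g} \<in> E" using edge_obtain[OF e'] by metis
  have V: "a \<in> V" "b \<in> V" "c \<in> V" "g \<in> V" using edge_in ab(3) cg(3) by auto
  have d1: "dist a b = 1" "dist c g = 1" using d_edge ab(3) cg(3) by auto
  have la: "dist a a = Suc (dist b a) \<or> dist b a = Suc (dist a a)" by (rule edge_level[OF V(1) ab(3)])
  have lc: "dist c a = Suc (dist g a) \<or> dist g a = Suc (dist c a)" by (rule edge_level[OF V(1) cg(3)])
  have S1: "dist a g + dist b c \<ge> 2"
  proof -
    have p1: "even (dist a g + dist a a + dist g a)" by (rule parity[OF V(1) V(1) V(4)])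
    have p2: "even (dist b c + dist b a + dist c a)" by (rule parity[OF V(1) V(2) V(3)])
    have ev: "even (dist a g + dist b c)" by (rule ev4[OF p1 p2 la lc])
    have "dist a g + dist b c \<noteq> 0"
    proof
      assume "dist a g + dist b c = 0"
      then have "a = g" "b = c" using d_0 V by auto
      then show False using ab cg ne by (auto simp: insert_commute)
    qed
    then show ?thesis using ev by presburger
  qed
  have lc': "dist g a = Suc (dist c a) \<or> dist c a = Suc (dist g a)" using lc by auto
  have S2: "dist a c + dist b g \<ge> 2"
  proof -
    have p1: "even (dist a c + dist a a + dist c a)" by (rule parity[OF V(1) V(1) V(3)])
    have p2: "even (dist b g + dist b a + dist g a)" by (rule parity[OF V(1) V(2) V(4)])
    have ev: "even (dist a c + dist b g)" by (rule ev4[OF p1 p2 la lc'])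
    have "dist a c + dist b g \<noteq> 0"
    proof
      assume "dist a c + dist b g = 0"
      then have "a = c" "b = g" using d_0 V by auto
      then show False using ab cg ne by auto
    qed
    then show ?thesis using ev by presburger
  qed
  show ?thesis unfolding ab(1) cg(1) ent_pair Fm_def using S1 S2 d1 by simp
qed

end

locale tree_pair = tree_ctx +
  fixes i j :: 'a
  assumes iV: "i \<in> V" and jV: "j \<in> V" and dgt: "gdist E i j > 1"
begin

abbreviation "D \<equiv> dist i j"

lemma ij_ne: "i \<noteq> j" using dgt by auto

lemma f_notin: "{i,j} \<notin> E" using d_edge dgt by fastforce

lemma ent_ff: "min4pc_entry E {i,j} {i,j} = 0"
  unfolding ent_pair Fm_def by simp

lemma ent_sym: assumes eE: "e \<in> E" shows "min4pc_entry E e {i,j} = min4pc_entry E {i,j} e"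
proof -
  obtain a b where e: "e = {a,b}" using edge_obtain[OF eE] by metis
  show ?thesis unfolding e ent_pair using Fm_comm by metis
qed

lemma edge_sums:
  assumes e: "{a,b} \<in> E"
  shows "dist i b + dist j a + 1 \<ge> D" "dist i a + dist j b + 1 \<ge> D"
    "odd (dist i b + dist j a + D)" "odd (dist i a + dist j b + D)"
proof -
  have V: "a \<in> V" "b \<in> V" using edge_in[OF e] by auto
  have dab: "dist a b = 1" "dist b a = 1" using d_edge[OF e] gdist_sym[of E a b] by auto
  have "D \<le> dist i b + dist b j" by (rule d_tri[OF iV V(2) jV])
  moreover have "dist b j \<le> dist b a + dist a j" by (rule d_tri[OF V(2) V(1) jV])
  ultimately show "dist i b + dist j a + 1 \<ge> D" using dab gdist_sym[of E j a] by simp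
  have "D \<le> dist i a + dist a j" by (rule d_tri[OF iV V(1) jV])
  moreover have "dist a j \<le> dist a b + dist b j" by (rule d_tri[OF V(1) V(2) jV])
  ultimately show "dist i a + dist j b + 1 \<ge> D" using dab gdist_sym[of E j b] by simp
  have lv: "dist a j = Suc (dist b j) \<or> dist b j = Suc (dist a j)" by (rule edge_level[OF jV e])
  have lv': "dist b j = Suc (dist a j) \<or> dist a j = Suc (dist b j)" using lv by auto
  have p1: "even (dist i b + D + dist b j)" by (rule parity[OF jV iV V(2)])
  have "odd (dist i b + dist a j + D)" by (rule ev3[OF p1 lv])
  then show "odd (dist i b + dist j a + D)" using gdist_sym[of E j a] by simp
  have p2: "even (dist i a + D + dist a j)" by (rule parity[OF jV iV V(1)])
  have "odd (dist i a + dist b j + D)" by (rule ev3[OF p2 lv'])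
  then show "odd (dist i a + dist j b + D)" using gdist_sym[of E j b] by simp
qed

lemma sum_cases: "(s::nat) + 1 \<ge> D \<Longrightarrow> odd (s + D) \<Longrightarrow> s + 1 = D \<or> s \<ge> D + 1"
  by presburger

lemma ent_f_edge:
  assumes e: "{a,b} \<in> E"
  shows "min4pc_entry E {i,j} {a,b} = (if dist i a + dist j b + 1 = D \<or> dist i b + dist j a + 1 = D
     then real D - 1 else real D + 1)"
proof -
  have dab: "dist a b = 1" using d_edge[OF e] .
  have c1: "dist i b + dist j a + 1 = D \<or> dist i b + dist j a \<ge> D + 1"
    using sum_cases edge_sums(1,3)[OF e] by blast
  have c2: "dist i a + dist j b + 1 = D \<or> dist i a + dist j b \<ge> D + 1"
    using sum_cases edge_sums(2,4)[OF e] by blast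
  have D2: "D \<ge> 2" using dgt by simp
  show ?thesis unfolding ent_pair Fm_def using c1 c2 dab D2 by (auto simp: min_def of_nat_diff)
qed

end


context tree_ctx
begin

lemma exist_mid:
  assumes x: "x \<in> V" and y: "y \<in> V"
  shows "t \<le> dist x y \<Longrightarrow> \<exists>z\<in>V. dist x z = t \<and> dist z y = dist x y - t"
proof (induction t)
  case 0
  have "dist x x = 0 \<and> dist x y = dist x y - 0" by simp
  then show ?case using x by blast
next
  case (Suc t)
  then obtain z where z: "z \<in> V" "dist x z = t" "dist z y = dist x y - t" by auto
  have "dist z y = Suc (dist x y - Suc t)" using z(3) Suc.prems by simp
  then obtain w where w: "{z,w} \<in> E" "dist w y = dist x y - Suc t" using d_step[OF z(1) y] by blast
  have wV: "w \<in> V" using edge_in[OF w(1)] by simp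
  have "dist x w \<le> dist x z + dist z w" by (rule d_tri[OF x z(1) wV])
  moreover have "dist z w = 1" by (rule d_edge[OF w(1)])
  moreover have "dist x y \<le> dist x w + dist w y" by (rule d_tri[OF x wV y])
  ultimately have "dist x w = Suc t" using z(2) w(2) Suc.prems by linarith
  then show ?case using wV w(2) by blast
qed

end

context tree_pair
begin

definition Gs where "Gs = {a \<in> V. a \<noteq> j \<and> dist i a + dist a j = D}"

lemma anc_unique:
  "a \<in> V \<Longrightarrow> dist i a + dist a j = D \<Longrightarrow> dist a j = n \<Longrightarrow> a = (par i ^^ n) j"
proof (induction n arbitrary: a)
  case 0
  then show ?case using d_0[OF 0(1) jV] by simp
next
  case (Suc n)
  obtain w where w: "{a,w} \<in> E" "dist w j = n" using d_step[OF Suc.prems(1) jV Suc.prems(3)] by blast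
  have wV: "w \<in> V" using edge_in[OF w(1)] by simp
  have "dist i w \<le> dist i a + dist a w" by (rule d_tri[OF iV Suc.prems(1) wV])
  moreover have daw: "dist a w = 1" by (rule d_edge[OF w(1)])
  moreover have "D \<le> dist i w + dist w j" by (rule d_tri[OF iV wV jV])
  ultimately have iw: "dist i w = Suc (dist i a)" using Suc.prems(2,3) w(2) by linarith
  then have "dist i w + dist w j = D" using Suc.prems(2,3) w(2) by simp
  then have wa: "w = (par i ^^ n) j" using Suc.IH[OF wV _ w(2)] by simp
  have ew: "{w,a} \<in> E" using w(1) by (simp add: insert_commute)
  have "Suc (dist a i) = dist w i" using iw gdist_sym[of E i a] gdist_sym[of E i w] by simp
  then have "a = par i w" by (rule par_unique[OF iV ew])
  then show ?case using wa by simp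
qed

lemma card_Gs: "card Gs = D"
proof -
  have "bij_betw (\<lambda>a. dist a j) Gs {1..D}"
  proof (rule bij_betw_imageI)
    show "inj_on (\<lambda>a. dist a j) Gs"
    proof (rule inj_onI)
      fix a a' assume a: "a \<in> Gs" and a': "a' \<in> Gs" and eq: "dist a j = dist a' j"
      have "a = (par i ^^ dist a j) j" using anc_unique a unfolding Gs_def by blast
      moreover have "a' = (par i ^^ dist a j) j" using anc_unique a' eq unfolding Gs_def by simp
      ultimately show "a = a'" by simp
    qed
    show "(\<lambda>a. dist a j) ` Gs = {1..D}"
    proof
      show "(\<lambda>a. dist a j) ` Gs \<subseteq> {1..D}"
      proof
        fix n assume "n \<in> (\<lambda>a. dist a j) ` Gs"
        then obtain a where a: "a \<in> Gs" "n = dist a j" by blast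
        then have "dist a j \<noteq> 0" using d_0[of a j] jV unfolding Gs_def by auto
        then show "n \<in> {1..D}" using a unfolding Gs_def by auto
      qed
      show "{1..D} \<subseteq> (\<lambda>a. dist a j) ` Gs"
      proof
        fix n assume n: "n \<in> {1..D}"
        obtain z where z: "z \<in> V" "dist i z = D - n" "dist z j = D - (D - n)"
          using exist_mid[OF iV jV, of "D - n"] by auto
        have zj: "dist z j = n" using z(3) n by auto
        then have "z \<noteq> j" using n by auto
        then have "z \<in> Gs" unfolding Gs_def using z zj n by auto
        then show "n \<in> (\<lambda>a. dist a j) ` Gs" using zj by force
      qed
    qed
  qed
  then show ?thesis by (simp add: bij_betw_same_card)
qed

lemma geo_edge:
  assumes e: "{a,b} \<in> E" and s: "dist i a + dist j b + 1 = D"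
  shows "a \<in> Gs" "b = par j a"
proof -
  have V: "a \<in> V" "b \<in> V" using edge_in[OF e] by auto
  have "dist a j \<le> dist a b + dist b j" by (rule d_tri[OF V(1) V(2) jV])
  moreover have "dist a b = 1" by (rule d_edge[OF e])
  moreover have "D \<le> dist i a + dist a j" by (rule d_tri[OF iV V(1) jV])
  moreover have "dist j b = dist b j" by (rule gdist_sym)
  ultimately have aj: "dist a j = Suc (dist b j)" using s by linarith
  then have "a \<noteq> j" by auto
  then show "a \<in> Gs" unfolding Gs_def using V aj s \<open>dist j b = dist b j\<close> by auto
  show "b = par j a" using par_unique[OF jV e] aj by simp
qed

definition Ks where "Ks = {e \<in> E. min4pc_entry E {i,j} e = real D - 1}"

lemma Ks_eq: "Ks = gm j ` Gs"
proof
  show "Ks \<subseteq> gm j ` Gs"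
  proof
    fix e assume eK: "e \<in> Ks"
    then have eE: "e \<in> E" unfolding Ks_def by simp
    obtain a b where ab: "e = {a,b}" "{a,b} \<in> E" using edge_obtain[OF eE] by metis
    have ba: "{b,a} \<in> E" using ab(2) by (simp add: insert_commute)
    have "min4pc_entry E {i,j} {a,b} = real D - 1" using eK ab unfolding Ks_def by simp
    then have "dist i a + dist j b + 1 = D \<or> dist i b + dist j a + 1 = D"
      unfolding ent_f_edge[OF ab(2)] by (auto split: if_splits)
    then show "e \<in> gm j ` Gs"
    proof
      assume "dist i a + dist j b + 1 = D"
      then have "a \<in> Gs" "b = par j a" using geo_edge[OF ab(2)] by auto
      then show ?thesis unfolding ab(1) gm_def by blast
    next
      assume "dist i b + dist j a + 1 = D"
      then have "b \<in> Gs" "a = par j b" using geo_edge[OF ba] by auto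
      then have "e = gm j b" unfolding ab(1) gm_def by auto
      then show ?thesis using \<open>b \<in> Gs\<close> by blast
    qed
  qed
  show "gm j ` Gs \<subseteq> Ks"
  proof
    fix e assume "e \<in> gm j ` Gs"
    then obtain a where a: "a \<in> Gs" "e = gm j a" by blast
    have aV: "a \<in> V" "a \<noteq> j" and sa: "dist i a + dist a j = D" using a(1) unfolding Gs_def by auto
    have eE: "{a, par j a} \<in> E" and pd: "Suc (dist (par j a) j) = dist a j" using par_ok[OF jV aV] by auto
    have "dist i a + dist j (par j a) + 1 = D" using sa pd gdist_sym[of E j "par j a"] by simp
    then have "min4pc_entry E {i,j} {a, par j a} = real D - 1" unfolding ent_f_edge[OF eE] by simp
    then show "e \<in> Ks" unfolding Ks_def a(2) gm_def using eE by simp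
  qed
qed

lemma card_Ks: "card Ks = D"
proof -
  have "inj_on (gm j) Gs" by (rule inj_on_subset[OF gm_inj[OF jV]]) (auto simp: Gs_def)
  then show ?thesis unfolding Ks_eq using card_image card_Gs by metis
qed

lemma ent_f_vals: assumes "e \<in> E"
  shows "min4pc_entry E {i,j} e = (if e \<in> Ks then real D - 1 else real D + 1)"
proof -
  obtain a b where ab: "e = {a,b}" "{a,b} \<in> E" using edge_obtain[OF assms] by metis
  show ?thesis unfolding Ks_def using assms ab by (simp add: ent_f_edge)
qed

end


definition nroots :: "(real \<Rightarrow> bool) \<Rightarrow> real poly \<Rightarrow> nat" where
  "nroots P p = (\<Sum>a\<in>{a. P a \<and> poly p a = 0}. order a p)"

lemma nroots_mult:
  assumes "p \<noteq> 0" "q \<noteq> 0"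
  shows "nroots P (p * q) = nroots P p + nroots P q"
proof -
  have pq: "p * q \<noteq> 0" using assms by simp
  let ?R = "{a. P a \<and> poly (p*q) a = 0}"
  let ?Rp = "{a. P a \<and> poly p a = 0}"
  let ?Rq = "{a. P a \<and> poly q a = 0}"
  have fin: "finite ?R" using poly_roots_finite[OF pq] by (rule finite_subset[rotated]) auto
  have "nroots P (p*q) = (\<Sum>a\<in>?R. order a p + order a q)"
    unfolding nroots_def using order_mult[OF pq] by simp
  also have "\<dots> = (\<Sum>a\<in>?R. order a p) + (\<Sum>a\<in>?R. order a q)" by (rule sum.distrib)
  also have "(\<Sum>a\<in>?R. order a p) = (\<Sum>a\<in>?Rp. order a p)"
    by (rule sum.mono_neutral_right[OF fin]) (auto simp: order_root)
  also have "(\<Sum>a\<in>?R. order a q) = (\<Sum>a\<in>?Rq. order a q)"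
    by (rule sum.mono_neutral_right[OF fin]) (auto simp: order_root)
  finally show ?thesis unfolding nroots_def .
qed

lemma nroots_lin: "nroots P [:-r, 1:] = (if P r then 1 else 0)"
proof -
  have "{a. P a \<and> poly [:-r,1:] a = 0} = (if P r then {r} else {})" by auto
  moreover have "order r [:-r,1:] = 1" using order_power_n_n[of r 1] by simp
  ultimately show ?thesis unfolding nroots_def by auto
qed

lemma nroots_pow: "nroots P ([:-r, 1:]^k) = (if P r then k else 0)"
proof (induction k)
  case 0
  have "{a. P a \<and> poly (1::real poly) a = 0} = {}" by auto
  then show ?case unfolding nroots_def by simp
next
  case (Suc k)
  have "[:-r, 1:]^Suc k = [:-r,1:] * [:-r,1:]^k" by simp
  also have "nroots P \<dots> = nroots P [:-r,1:] + nroots P ([:-r,1:]^k)"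
    by (rule nroots_mult) auto
  finally show ?case using Suc nroots_lin[of P r] by simp
qed

lemma cubic_roots:
  fixes q0 q1 q2 :: real
  assumes p0: "poly [:q0,q1,q2,1:] 0 < 0" and pm2: "poly [:q0,q1,q2,1:] (-2) \<ge> 0"
  shows "nroots (\<lambda>a. a < 0) [:q0,q1,q2,1:] = 2 \<and> nroots (\<lambda>a. a > 0) [:q0,q1,q2,1:] = 1"
proof -
  let ?p = "[:q0,q1,q2,1:]"
  define b where "b = 1 + \<bar>q0\<bar> + \<bar>q1\<bar> + \<bar>q2\<bar>"
  have b1: "b \<ge> 1" unfolding b_def by simp
  have "b*b*b = b*b*(1 + \<bar>q0\<bar> + \<bar>q1\<bar> + \<bar>q2\<bar>)" unfolding b_def by simp
  also have "\<dots> = b*b + b*b*\<bar>q0\<bar> + b*b*\<bar>q1\<bar> + b*b*\<bar>q2\<bar>" by (simp add: algebra_simps)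
  finally have bb: "b*b*b = b*b + b*b*\<bar>q0\<bar> + b*b*\<bar>q1\<bar> + b*b*\<bar>q2\<bar>" .
  have "1*1 \<le> b*b" using b1 by (intro mult_mono) auto
  then have "b*b \<ge> 1" by simp
  have t0: "b*b*\<bar>q0\<bar> \<ge> -q0"
  proof -
    have "1*\<bar>q0\<bar> \<le> (b*b)*\<bar>q0\<bar>" using \<open>b*b \<ge> 1\<close> by (intro mult_right_mono) auto
    then show ?thesis by linarith
  qed
  have "b*b \<ge> b*1" using b1 by (intro mult_left_mono) auto
  have t1: "b*b*\<bar>q1\<bar> \<ge> -q1*b"
  proof -
    have "\<bar>q1\<bar>*b \<le> \<bar>q1\<bar>*(b*b)" using \<open>b*b \<ge> b*1\<close> by (intro mult_left_mono) auto
    moreover have "-q1*b \<le> \<bar>q1\<bar>*b" using b1 by (intro mult_right_mono) auto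
    ultimately show ?thesis by (simp add: mult.commute)
  qed
  have t2: "b*b*\<bar>q2\<bar> \<ge> -q2*(b*b)"
  proof -
    have "-q2*(b*b) \<le> \<bar>q2\<bar>*(b*b)" by (intro mult_right_mono) auto
    then show ?thesis by (simp add: mult.commute)
  qed
  have pb: "poly ?p b > 0"
    using bb t0 t1 t2 \<open>b*b \<ge> 1\<close> by (simp add: algebra_simps) 
  obtain c where c: "0 < c" "c < b" "poly ?p c = 0" using poly_IVT_pos[OF _ p0 pb] b1 by auto
  define g1 where "g1 = q2 + c"
  define g0 where "g0 = q1 + c*g1"
  have rem: "q0 + c*g0 = 0" using c(3) unfolding g0_def g1_def by (simp add: algebra_simps)
  have f1: "?p = [:-c,1:] * [:g0,g1,1:]"
    using rem g0_def g1_def by (simp add: field_simps)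
  have g0pos: "g0 > 0"
  proof -
    have "poly ?p 0 = -c*g0" by (subst f1) simp
    then have "c*g0 > 0" using p0 by simp
    then show ?thesis using c(1) by (simp add: zero_less_mult_iff)
  qed
  have qm2: "poly [:g0,g1,1:] (-2) \<le> 0"
  proof -
    define v where "v = poly [:g0,g1,1:] (-2)"
    have lc: "poly [:-c,1:] (-2) = -2-c" by simp
    have e: "poly ?p (-2) = (-2-c) * v" unfolding v_def by (subst f1) (simp only: poly_mult lc)
    have "(2+c)*v = -((-2-c)*v)" by (simp add: algebra_simps)
    then have "(2+c)*v \<le> 0" using pm2 e by linarith
    then show ?thesis using c(1) unfolding v_def[symmetric] by (simp add: mult_le_0_iff)
  qed
  obtain r1 where r1: "r1 \<le> -2" "poly [:g0,g1,1:] r1 = 0"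
  proof (cases "poly [:g0,g1,1:] (-2) = 0")
    case True then show ?thesis using that[of "-2"] by simp
  next
    case False
    then have neg: "poly [:g0,g1,1:] (-2) < 0" using qm2 by simp
    define M where "M = -3 - \<bar>g0\<bar> - \<bar>g1\<bar>"
    have "M < -2" unfolding M_def by simp
    have "poly [:g0,g1,1:] M = g0 + M*(g1 + M)" by simp
    moreover have "M*(g1 + M) \<ge> 3 + \<bar>g0\<bar>"
    proof -
      have "-M \<ge> 1" "-(g1+M) \<ge> 3 + \<bar>g0\<bar>" unfolding M_def by auto
      then have "(-M)*(-(g1+M)) \<ge> 1*(3 + \<bar>g0\<bar>)" by (intro mult_mono) auto
      moreover have "(-M)*(-(g1+M)) = M*(g1+M)" by (simp add: algebra_simps)
      ultimately show ?thesis by (metis mult_1)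
    qed
    ultimately have "poly [:g0,g1,1:] M > 0" by simp
    then obtain x where "M < x" "x < -2" "poly [:g0,g1,1:] x = 0"
      using poly_IVT_neg[OF \<open>M < -2\<close> _ neg] by auto
    then show ?thesis using that[of x] by simp
  qed
  define h0 where "h0 = g1 + r1"
  have rem2: "g0 + r1*h0 = 0" using r1(2) unfolding h0_def by (simp add: algebra_simps)
  have f2: "[:g0,g1,1:] = [:-r1,1:] * [:-(-h0),1:]"
    using rem2 h0_def by (simp add: field_simps)
  have "g0 = -r1*h0" using rem2 by simp
  then have "(-r1)*h0 > 0" using g0pos by simp
  then have "h0 > 0" using r1(1) by (simp add: zero_less_mult_iff mult_less_0_iff)
  have fac: "?p = [:-c,1:] * ([:-r1,1:] * [:-(-h0),1:])" using f1 f2 by simp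
  have nz: "[:-c,1:] \<noteq> 0" "[:-r1,1:] \<noteq> 0" "[:-(-h0),1:] \<noteq> 0" by auto
  have "nroots P ?p = nroots P [:-c,1:] + (nroots P [:-r1,1:] + nroots P [:-(-h0),1:])" for P
  proof -
    have "nroots P ([:-r1,1:] * [:-(-h0),1:]) = nroots P [:-r1,1:] + nroots P [:-(-h0),1:]"
      by (rule nroots_mult) (use nz in auto)
    moreover have "nroots P ([:-c,1:] * ([:-r1,1:] * [:-(-h0),1:])) = nroots P [:-c,1:] + nroots P ([:-r1,1:] * [:-(-h0),1:])"
      by (rule nroots_mult) (use nz in auto)
    ultimately show ?thesis unfolding fac by simp
  qed
  moreover have "nroots P [:-(-h0),1:] = (if P (-h0) then 1 else 0)" for P by (rule nroots_lin)
  ultimately show ?thesis unfolding nroots_lin using c(1) r1(1) \<open>h0 > 0\<close> by simp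
qed


lemma prod_list_map_const_one: "prod_list (map (\<lambda>_. c) xs) = c ^ length xs"
  by (induction xs) auto

lemma sum_if_eq_const:
  fixes a b :: real
  assumes "j < s"
  shows "(\<Sum>k\<in>{0..<s}. if k = j then a else b) = a + (real s - 1) * b"
proof -
  have "(\<Sum>k\<in>{0..<s}. if k = j then a else b) = (\<Sum>k\<in>{0..<s}. (if k = j then a - b else 0) + b)"
    by (rule sum.cong) auto
  also have "\<dots> = (a - b) + real s * b" using assms by (simp add: sum.distrib)
  finally show ?thesis by (simp add: algebra_simps)
qed

lemma detJ:
  fixes a b :: real
  assumes s: "s \<ge> 1"
  shows "det (mat s s (\<lambda>(i,j). if i = j then a else b)) = (a - b)^(s-1) * (a + (real s - 1) * b)"
proof -
  define X where "X = mat s s (\<lambda>(i,j). if i = j then a else b)"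
  define L where "L = mat s s (\<lambda>(i,j). if i = j then 1 else if i = 0 then -1 else (0::real))"
  define R where "R = mat s s (\<lambda>(i,j). if i = j then 1 else if i = 0 then 1 else (0::real))"
  have X: "X \<in> carrier_mat s s" and L: "L \<in> carrier_mat s s" and R: "R \<in> carrier_mat s s"
    unfolding X_def L_def R_def by auto
  have detL: "det L = 1"
  proof -
    have "det L = prod_list (diag_mat L)"
      by (rule det_upper_triangular[OF _ L]) (auto simp: upper_triangular_def L_def)
    also have "diag_mat L = map (\<lambda>_. 1) [0..<s]" unfolding diag_mat_def L_def by auto
    finally show ?thesis by (simp add: prod_list_map_const_one)
  qed
  have detR: "det R = 1"
  proof -
    have "det R = prod_list (diag_mat R)"
      by (rule det_upper_triangular[OF _ R]) (auto simp: upper_triangular_def R_def)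
    also have "diag_mat R = map (\<lambda>_. 1) [0..<s]" unfolding diag_mat_def R_def by auto
    finally show ?thesis by (simp add: prod_list_map_const_one)
  qed
  define Y where "Y = mat s s (\<lambda>(i,j). if j = 0 then X $$ (i,0) else X $$ (i,j) - X $$ (i,0))"
  have XL: "X * L = Y"
  proof (rule eq_matI)
    fix i j assume ij: "i < dim_row Y" "j < dim_col Y"
    then have i: "i < s" and j: "j < s" unfolding Y_def by auto
    have "(X * L) $$ (i,j) = (\<Sum>k\<in>{0..<s}. X $$ (i,k) * L $$ (k,j))"
      using i j X L by (simp add: scalar_prod_def)
    also have "\<dots> = (\<Sum>k\<in>{0..<s}. (if k = j then X $$ (i,k) else 0) - (if j \<noteq> 0 \<and> k = 0 then X $$ (i,k) else 0))"
      by (rule sum.cong) (auto simp: L_def j less_SucI)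
    also have "\<dots> = Y $$ (i,j)" using i j s by (simp add: sum_subtractf Y_def)
    finally show "(X * L) $$ (i,j) = Y $$ (i,j)" .
  qed (auto simp: Y_def X_def L_def)
  define Z where "Z = mat s s (\<lambda>(i,j). if i = 0 then (if j = 0 then a + (real s - 1) * b else 0)
      else (if j = 0 then b else if i = j then a - b else 0))"
  have RY: "R * Y = Z"
  proof (rule eq_matI)
    fix i j assume ij: "i < dim_row Z" "j < dim_col Z"
    then have i: "i < s" and j: "j < s" unfolding Z_def by auto
    have "(R * Y) $$ (i,j) = (\<Sum>k\<in>{0..<s}. R $$ (i,k) * Y $$ (k,j))"
      using i j R by (simp add: scalar_prod_def Y_def)
    also have "\<dots> = Z $$ (i,j)"
    proof (cases "i = 0")
      case True
      have "(\<Sum>k\<in>{0..<s}. R $$ (i,k) * Y $$ (k,j)) = (\<Sum>k\<in>{0..<s}. Y $$ (k,j))"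
        by (rule sum.cong) (auto simp: R_def True)
      also have "\<dots> = (\<Sum>k\<in>{0..<s}. if j = 0 then (if k = 0 then a else b) else (if k = j then a else b) - (if k = 0 then a else b))"
        by (rule sum.cong) (auto simp: Y_def X_def j)
      also have "\<dots> = Z $$ (i,j)"
      proof (cases "j = 0")
        case True
        then show ?thesis using sum_if_eq_const[of 0 s a b] s i j \<open>i = 0\<close> by (simp add: Z_def)
      next
        case False
        then have "(\<Sum>k\<in>{0..<s}. if j = 0 then (if k = 0 then a else b) else (if k = j then a else b) - (if k = 0 then a else b))
          = (\<Sum>k\<in>{0..<s}. if k = j then a else b) - (\<Sum>k\<in>{0..<s}. if k = 0 then a else b)"
          by (simp add: sum_subtractf)
        also have "\<dots> = 0" using sum_if_eq_const[of 0 s a b] sum_if_eq_const[of j s a b] s j by simp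
        finally show ?thesis using False i j \<open>i = 0\<close> by (simp add: Z_def)
      qed
      finally show ?thesis .
    next
      case False
      have "(\<Sum>k\<in>{0..<s}. R $$ (i,k) * Y $$ (k,j)) = (\<Sum>k\<in>{0..<s}. if k = i then Y $$ (k,j) else 0)"
        by (rule sum.cong) (auto simp: R_def False i)
      also have "\<dots> = Y $$ (i,j)" using i by simp
      also have "\<dots> = Z $$ (i,j)" using False i j by (simp add: Y_def X_def Z_def)
      finally show ?thesis .
    qed
    finally show "(R * Y) $$ (i,j) = Z $$ (i,j)" .
  qed (auto simp: Z_def R_def Y_def)
  have Z: "Z \<in> carrier_mat s s" unfolding Z_def by auto
  have detZ: "det Z = (a - b)^(s-1) * (a + (real s - 1) * b)"
  proof -
    have "det Z = prod_list (diag_mat Z)"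
      by (rule det_lower_triangular[OF _ Z]) (auto simp: Z_def)
    also have "diag_mat Z = (a + (real s - 1) * b) # map (\<lambda>_. a - b) [1..<s]"
    proof -
      have "[0..<s] = 0 # [1..<s]" using s by (simp add: upt_rec)
      then show ?thesis unfolding diag_mat_def using s by (auto simp: Z_def)
    qed
    finally show ?thesis by (simp add: prod_list_map_const_one)
  qed
  have "det (R * (X * L)) = det R * det (X * L)" by (rule det_mult[OF R]) (use X L in auto)
  also have "det (X * L) = det X * det L" by (rule det_mult[OF X L])
  finally have "det Z = det X" using RY XL detR detL by simp
  then show ?thesis using detZ X_def by simp
qed

definition Ncan :: "nat \<Rightarrow> (nat \<Rightarrow> real) \<Rightarrow> real mat" where
  "Ncan s c = mat (Suc s) (Suc s) (\<lambda>(i,j). if i < s \<and> j < s then (if i = j then 0 else 2)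
      else if i < s then c i else if j < s then c j else 0)"

lemma det_Ncan:
  fixes x :: real and c :: "nat \<Rightarrow> real"
  assumes s: "s \<ge> 1" and x1: "x + 2 \<noteq> 0" and x2: "x + 2 - 2 * real s \<noteq> 0"
  defines "S1 \<equiv> (\<Sum>k\<in>{0..<s}. c k)" and "S2 \<equiv> (\<Sum>k\<in>{0..<s}. c k * c k)"
  shows "poly (char_poly (Ncan s c)) x =
    (x+2)^(s-1) * (x + 2 - 2 * real s) * (x - (S2 + 2 * S1 * S1 / (x + 2 - 2 * real s)) / (x + 2))"
proof -
  define N where "N = Ncan s c"
  have N: "N \<in> carrier_mat (Suc s) (Suc s)" unfolding N_def Ncan_def by auto
  define M where "M = mat (Suc s) (Suc s) (\<lambda>(i,j). (if i = j then x else 0) - N $$ (i,j))"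
  have M: "M \<in> carrier_mat (Suc s) (Suc s)" unfolding M_def by auto
  have Mij: "\<And>i j. i < Suc s \<Longrightarrow> j < Suc s \<Longrightarrow> M $$ (i,j) = (if i = j then x else 0) -
     (if i < s \<and> j < s then (if i = j then 0 else 2) else if i < s then c i else if j < s then c j else 0)"
    by (simp add: M_def N_def Ncan_def)
  have pM: "poly (char_poly N) x = det M"
  proof -
    have "poly (char_poly N) x = det (- char_matrix N x)" by (rule char_poly_matrix[OF N])
    also have "- char_matrix N x = M"
      by (rule eq_matI) (use N in \<open>auto simp: M_def char_matrix_def\<close>)
    finally show ?thesis .
  qed
  define t where "t = 2 * S1 / (x + 2 - 2 * real s)"
  define w where "w = (\<lambda>k. (c k + t) / (x + 2))"
  define L where "L = mat (Suc s) (Suc s) (\<lambda>(i,j). if i = j then 1 else if j = s \<and> i < s then w i else 0)"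
  have L: "L \<in> carrier_mat (Suc s) (Suc s)" unfolding L_def by auto
  have detL: "det L = 1"
  proof -
    have "det L = prod_list (diag_mat L)"
      by (rule det_upper_triangular[OF _ L]) (auto simp: upper_triangular_def L_def)
    also have "diag_mat L = map (\<lambda>_. 1) [0..<Suc s]" unfolding diag_mat_def L_def by auto
    finally show ?thesis by (simp add: prod_list_map_const_one)
  qed
  have sumw: "(\<Sum>k\<in>{0..<s}. w k) = (S1 + real s * t) / (x + 2)"
    unfolding w_def S1_def by (simp add: sum_divide_distrib[symmetric] sum.distrib)
  have tt: "t * (x + 2 - 2 * real s) = 2 * S1" unfolding t_def using x2 by simp
  define gam where "gam = x - (\<Sum>k\<in>{0..<s}. c k * w k)"
  have Pcol: "(M * L) $$ (i, s) = (if i = s then gam else 0)" if i: "i < Suc s" for i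
  proof -
    have "(M * L) $$ (i, s) = (\<Sum>k\<in>{0..<Suc s}. M $$ (i,k) * L $$ (k,s))"
      using i M L by (simp add: scalar_prod_def)
    also have "\<dots> = (\<Sum>k\<in>{0..<s}. M $$ (i,k) * w k) + M $$ (i,s)"
      by (simp add: L_def w_def)
    also have "\<dots> = (if i = s then gam else 0)"
    proof (cases "i = s")
      case True
      have "(\<Sum>k\<in>{0..<s}. M $$ (i,k) * w k) = (\<Sum>k\<in>{0..<s}. - (c k * w k))"
        by (rule sum.cong) (auto simp: Mij True)
      moreover have "M $$ (i,s) = x" by (simp add: Mij True)
      ultimately show ?thesis using True by (simp add: gam_def sum_negf)
    next
      case False
      then have iS: "i < s" using i by simp
      have "(\<Sum>k\<in>{0..<s}. M $$ (i,k) * w k) = (\<Sum>k\<in>{0..<s}. (if k = i then (x + 2) * w k else 0) - 2 * w k)"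
        by (rule sum.cong) (auto simp: Mij iS algebra_simps less_SucI)
      also have "\<dots> = (x + 2) * w i - 2 * ((S1 + real s * t) / (x + 2))"
        using iS by (simp add: sum_subtractf sum_distrib_left[symmetric] sumw)
      also have "\<dots> = c i"
      proof -
        have "(x + 2) * w i = c i + t" unfolding w_def using x1 by simp
        moreover have "2 * ((S1 + real s * t) / (x + 2)) = t"
        proof -
          have "t * (x + 2) = 2 * S1 + 2 * real s * t" using tt by (simp add: algebra_simps)
          then show ?thesis using x1 by (simp add: field_simps)
        qed
        ultimately show ?thesis by simp
      qed
      finally have "(\<Sum>k\<in>{0..<s}. M $$ (i,k) * w k) = c i" .
      moreover have "M $$ (i,s) = - c i" using iS by (simp add: Mij)
      ultimately show ?thesis using False by simp
    qed
    finally show ?thesis .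
  qed
  have MLcar: "M * L \<in> carrier_mat (Suc s) (Suc s)" using M L by auto
  have "det (M * L) = (\<Sum>i<Suc s. (M * L) $$ (i,s) * cofactor (M * L) i s)"
    by (rule laplace_expansion_column[OF MLcar]) simp
  also have "\<dots> = (\<Sum>i<Suc s. if i = s then gam * cofactor (M * L) s s else 0)"
    by (rule sum.cong) (auto simp: Pcol)
  also have "\<dots> = gam * cofactor (M * L) s s" by simp
  also have "cofactor (M * L) s s = det (mat_delete (M * L) s s)"
    by (simp add: cofactor_def)
  also have "mat_delete (M * L) s s = mat s s (\<lambda>(i,j). if i = j then x else -2)"
  proof (rule eq_matI)
    fix i j assume "i < dim_row (mat s s (\<lambda>(i,j). if i = j then x else (-2::real)))"
      "j < dim_col (mat s s (\<lambda>(i,j). if i = j then x else (-2::real)))"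
    then have i: "i < s" and j: "j < s" by auto
    have "mat_delete (M * L) s s $$ (i,j) = (M * L) $$ (i,j)"
      using i j M L by (simp add: mat_delete_def)
    also have "\<dots> = (\<Sum>k\<in>{0..<Suc s}. M $$ (i,k) * L $$ (k,j))"
      using i j M L by (simp add: scalar_prod_def)
    also have "\<dots> = (\<Sum>k\<in>{0..<Suc s}. if k = j then M $$ (i,k) else 0)"
      by (rule sum.cong) (use j in \<open>auto simp: L_def less_SucI\<close>)
    also have "\<dots> = M $$ (i,j)" using j by simp
    also have "\<dots> = (if i = j then x else -2)" using i j by (simp add: Mij)
    finally show "mat_delete (M * L) s s $$ (i,j) = mat s s (\<lambda>(i,j). if i = j then x else (-2::real)) $$ (i,j)"
      using i j by simp
  qed (use MLcar in \<open>auto simp: mat_delete_def\<close>)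
  also have "det (mat s s (\<lambda>(i,j). if i = j then x else (-2::real))) = (x + 2)^(s-1) * (x + 2 - 2 * real s)"
    using detJ[OF s, of x "-2"] by (simp add: algebra_simps)
  finally have dPL: "det (M * L) = gam * ((x + 2)^(s-1) * (x + 2 - 2 * real s))" .
  have "det (M * L) = det M" using det_mult[OF M L] detL by simp
  moreover have "gam = x - (S2 + 2 * S1 * S1 / (x + 2 - 2 * real s)) / (x + 2)"
  proof -
    have "(\<Sum>k\<in>{0..<s}. c k * w k) = (S2 + t * S1) / (x + 2)"
      unfolding w_def S1_def S2_def
      by (simp add: sum_divide_distrib[symmetric] sum.distrib algebra_simps sum_distrib_left)
    then show ?thesis unfolding gam_def t_def by (simp add: algebra_simps)
  qed
  ultimately show ?thesis using pM dPL N_def by (simp add: algebra_simps)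
qed

lemma poly_eq_cofinite:
  fixes p q :: "real poly"
  assumes F: "finite F" and eq: "\<And>x. x \<notin> F \<Longrightarrow> poly p x = poly q x"
  shows "p = q"
proof (rule ccontr)
  assume "p \<noteq> q"
  then have "p - q \<noteq> 0" by simp
  then have fin: "finite {x. poly (p - q) x = 0}" by (rule poly_roots_finite)
  have "UNIV - F \<subseteq> {x. poly (p - q) x = 0}" using eq by auto
  then have "finite (UNIV - F)" using fin by (rule finite_subset)
  then have "finite (UNIV :: real set)" using F by (metis Diff_infinite_finite)
  then show False by (simp add: infinite_UNIV_char_0)
qed

lemma aux_field: fixes A B x S1 S2 :: real
  assumes "A \<noteq> 0" "B \<noteq> 0"
  shows "A*B*(x - (S2 + 2*S1*S1/B)/A) = A*B*x - B*S2 - 2*S1*S1"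
proof -
  have "A*B*((S2 + 2*S1*S1/B)/A) = B*(S2 + 2*S1*S1/B)" using assms by simp
  also have "\<dots> = B*S2 + 2*S1*S1" using assms by (simp add: algebra_simps)
  finally show ?thesis by (simp add: algebra_simps)
qed

lemma char_poly_Ncan:
  fixes c :: "nat \<Rightarrow> real"
  assumes s: "s \<ge> 2"
  defines "S1 \<equiv> (\<Sum>k\<in>{0..<s}. c k)" and "S2 \<equiv> (\<Sum>k\<in>{0..<s}. c k * c k)"
  shows "char_poly (Ncan s c) = [:-(-2),1:]^(s-2) *
    [: 2 * (real s - 1) * S2 - 2 * S1 * S1, 4 - 4 * real s - S2, 4 - 2 * real s, 1 :]"
proof (rule poly_eq_cofinite[of "{-2, 2 * real s - 2}"])
  fix x :: real assume "x \<notin> {-2, 2 * real s - 2}"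
  then have x1: "x + 2 \<noteq> 0" and x2: "x + 2 - 2 * real s \<noteq> 0" by auto
  have "poly (char_poly (Ncan s c)) x =
    (x+2)^(s-1) * (x + 2 - 2 * real s) * (x - (S2 + 2 * S1 * S1 / (x + 2 - 2 * real s)) / (x + 2))"
    unfolding S1_def S2_def by (rule det_Ncan) (use s x1 x2 in auto)
  also have "(x+2)^(s-1) = (x+2)^(s-2) * (x+2)"
    using s by (metis Suc_diff_Suc Suc_1 diff_Suc_1 less_le_trans lessI power_Suc2 numeral_2_eq_2)
  also have "(x+2)^(s-2) * (x+2) * (x + 2 - 2 * real s) * (x - (S2 + 2 * S1 * S1 / (x + 2 - 2 * real s)) / (x + 2))
     = (x+2)^(s-2) * ((x+2) * (x + 2 - 2 * real s) * x - S2 * (x + 2 - 2 * real s) - 2 * S1 * S1)"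
    using aux_field[OF x1 x2, of x S2 S1] by (simp add: mult.assoc)
  also have "\<dots> = poly ([:-(-2),1:]^(s-2) *
    [: 2 * (real s - 1) * S2 - 2 * S1 * S1, 4 - 4 * real s - S2, 4 - 2 * real s, 1 :]) x"
    by (simp add: algebra_simps power2_eq_square)
  finally show "poly (char_poly (Ncan s c)) x = poly ([:-(-2),1:]^(s-2) *
    [: 2 * (real s - 1) * S2 - 2 * S1 * S1, 4 - 4 * real s - S2, 4 - 2 * real s, 1 :]) x" .
qed simp


lemma char_poly_reindex:
  fixes g :: "'b \<Rightarrow> 'b \<Rightarrow> real"
  assumes b1: "bij_betw idx {0..<n} X" and b2: "bij_betw idx' {0..<n} X"
  shows "char_poly (mat n n (\<lambda>(a,b). g (idx a) (idx b))) = char_poly (mat n n (\<lambda>(a,b). g (idx' a) (idx' b)))"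
proof -
  define \<sigma> where "\<sigma> = (\<lambda>a. the_inv_into {0..<n} idx (idx' a))"
  define \<tau> where "\<tau> = (\<lambda>a. the_inv_into {0..<n} idx' (idx a))"
  have inj1: "inj_on idx {0..<n}" and im1: "idx ` {0..<n} = X" using b1 by (auto simp: bij_betw_def)
  have inj2: "inj_on idx' {0..<n}" and im2: "idx' ` {0..<n} = X" using b2 by (auto simp: bij_betw_def)
  have s1: "\<sigma> a < n" "idx (\<sigma> a) = idx' a" if "a < n" for a
  proof -
    have "idx' a \<in> idx ` {0..<n}" using that im1 im2 by auto
    then obtain x where x: "x < n" "idx' a = idx x" by auto
    then have "\<sigma> a = x" unfolding \<sigma>_def using the_inv_into_f_f[OF inj1] by simp
    then show "\<sigma> a < n" "idx (\<sigma> a) = idx' a" using x by auto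
  qed
  have t1: "\<tau> a < n" "idx' (\<tau> a) = idx a" if "a < n" for a
  proof -
    have "idx a \<in> idx' ` {0..<n}" using that im1 im2 by auto
    then obtain x where x: "x < n" "idx a = idx' x" by auto
    then have "\<tau> a = x" unfolding \<tau>_def using the_inv_into_f_f[OF inj2] by simp
    then show "\<tau> a < n" "idx' (\<tau> a) = idx a" using x by auto
  qed
  have iff: "(i = \<sigma> k) \<longleftrightarrow> (k = \<tau> i)" if "i < n" "k < n" for i k
  proof
    assume "i = \<sigma> k"
    then have "idx' (\<tau> i) = idx' k" using t1[OF that(1)] s1[OF that(2)] by simp
    then show "k = \<tau> i" using inj2 t1[OF that(1)] that(2) by (auto dest: inj_onD)
  next
    assume "k = \<tau> i"
    then have "idx (\<sigma> k) = idx i" using t1[OF that(1)] s1[OF that(2)] by simp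
    then show "i = \<sigma> k" using inj1 s1[OF that(2)] that(1) by (auto dest: inj_onD)
  qed
  have tinj: "a = b" if "a < n" "b < n" "\<tau> a = \<tau> b" for a b
    using t1[OF that(1)] t1[OF that(2)] that inj1 by (metis atLeastLessThan_iff inj_onD zero_le)
  define A where "A = mat n n (\<lambda>(a,b). g (idx a) (idx b))"
  define A' where "A' = mat n n (\<lambda>(a,b). g (idx' a) (idx' b))"
  define P where "P = mat n n (\<lambda>(i,j). if i = \<sigma> j then 1 else (0::real))"
  define Q where "Q = mat n n (\<lambda>(i,j). if j = \<sigma> i then 1 else (0::real))"
  have car: "A \<in> carrier_mat n n" "A' \<in> carrier_mat n n" "P \<in> carrier_mat n n" "Q \<in> carrier_mat n n"
    unfolding A_def A'_def P_def Q_def by auto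
  have PQ: "P * Q = 1\<^sub>m n"
  proof (rule eq_matI)
    fix i j assume "i < dim_row (1\<^sub>m n :: real mat)" "j < dim_col (1\<^sub>m n :: real mat)"
    then have i: "i < n" and j: "j < n" by auto
    have "(P * Q) $$ (i,j) = (\<Sum>k\<in>{0..<n}. P $$ (i,k) * Q $$ (k,j))"
      using i j car by (simp add: scalar_prod_def)
    also have "\<dots> = (\<Sum>k\<in>{0..<n}. if k = \<tau> i then (if j = i then 1 else 0) else 0)"
      by (rule sum.cong) (use i j iff tinj in \<open>auto simp: P_def Q_def\<close>)
    also have "\<dots> = (1\<^sub>m n :: real mat) $$ (i,j)"
      using i j t1 iff[of i "\<tau> j"] iff[of j "\<tau> j"] by auto
    finally show "(P * Q) $$ (i,j) = (1\<^sub>m n :: real mat) $$ (i,j)" .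
  qed (use car in auto)
  have QP: "Q * P = 1\<^sub>m n"
  proof (rule eq_matI)
    fix i j assume "i < dim_row (1\<^sub>m n :: real mat)" "j < dim_col (1\<^sub>m n :: real mat)"
    then have i: "i < n" and j: "j < n" by auto
    have "(Q * P) $$ (i,j) = (\<Sum>k\<in>{0..<n}. Q $$ (i,k) * P $$ (k,j))"
      using i j car by (simp add: scalar_prod_def)
    also have "\<dots> = (\<Sum>k\<in>{0..<n}. if k = \<sigma> i then (if \<sigma> i = \<sigma> j then 1 else 0) else 0)"
      by (rule sum.cong) (use i j in \<open>auto simp: P_def Q_def\<close>)
    also have "\<dots> = (if \<sigma> i = \<sigma> j then 1 else 0)" using i s1 by auto
    also have "\<dots> = (1\<^sub>m n :: real mat) $$ (i,j)"
    proof -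
      have "\<sigma> i = \<sigma> j \<longleftrightarrow> i = j"
        using iff[OF s1(1)[OF i] i] iff[OF s1(1)[OF i] j] by auto
      then show ?thesis using i j by simp
    qed
    finally show "(Q * P) $$ (i,j) = (1\<^sub>m n :: real mat) $$ (i,j)" .
  qed (use car in auto)
  have PA: "P * A' = mat n n (\<lambda>(i,j). A' $$ (\<tau> i, j))"
  proof (rule eq_matI)
    fix i j assume "i < dim_row (mat n n (\<lambda>(i,j). A' $$ (\<tau> i, j)))" "j < dim_col (mat n n (\<lambda>(i,j). A' $$ (\<tau> i, j)))"
    then have i: "i < n" and j: "j < n" by auto
    have "(P * A') $$ (i,j) = (\<Sum>k\<in>{0..<n}. P $$ (i,k) * A' $$ (k,j))"
      using i j car by (simp add: scalar_prod_def)
    also have "\<dots> = (\<Sum>k\<in>{0..<n}. if k = \<tau> i then A' $$ (k,j) else 0)"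
      by (rule sum.cong) (use i j iff in \<open>auto simp: P_def\<close>)
    also have "\<dots> = A' $$ (\<tau> i, j)" using i t1 by auto
    finally show "(P * A') $$ (i,j) = mat n n (\<lambda>(i,j). A' $$ (\<tau> i, j)) $$ (i,j)" using i j by simp
  qed (use car in auto)
  have PAQ: "P * A' * Q = A"
  proof (rule eq_matI)
    fix i j assume "i < dim_row A" "j < dim_col A"
    then have i: "i < n" and j: "j < n" using car by auto
    have "(P * A' * Q) $$ (i,j) = (\<Sum>k\<in>{0..<n}. A' $$ (\<tau> i, k) * Q $$ (k,j))"
      using i j car unfolding PA by (simp add: scalar_prod_def)
    also have "\<dots> = (\<Sum>k\<in>{0..<n}. if k = \<tau> j then A' $$ (\<tau> i, k) else 0)"
      by (rule sum.cong) (use i j iff in \<open>auto simp: Q_def\<close>)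
    also have "\<dots> = A' $$ (\<tau> i, \<tau> j)" using j t1 by auto
    also have "\<dots> = A $$ (i,j)" using i j t1 by (simp add: A_def A'_def)
    finally show "(P * A' * Q) $$ (i,j) = A $$ (i,j)" .
  qed (use car in auto)
  have "similar_mat A A'"
    unfolding similar_mat_def similar_mat_wit_def
    by (rule exI[of _ P], rule exI[of _ Q]) (use car PQ QP PAQ in \<open>auto simp: Let_def\<close>)
  then show ?thesis unfolding A_def A'_def by (rule char_poly_similar)
qed


theorem theorem3p1:
  fixes V :: "'a set" and E :: "'a set set" and i j :: 'a and idx :: "nat \<Rightarrow> 'a set"
  assumes tree: "is_tree V E"
    and ij: "i \<in> V" "j \<in> V"
    and d: "gdist E i j > 1"
    and enum: "bij_betw idx {0..<card (E \<union> {{i, j}})} (E \<union> {{i, j}})"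
  shows "num_neg_eigs (min4pc_submatrix E (card (E \<union> {{i, j}})) idx) = card V - 1
       \<and> num_pos_eigs (min4pc_submatrix E (card (E \<union> {{i, j}})) idx) = 1"
proof -
  interpret tp: tree_pair V E i j
    by unfold_locales (use tree ij d in auto)
  define s where "s = card E"
  define f where "f = {i,j}"
  define D where "D = gdist E i j"
  have fn: "f \<notin> E" unfolding f_def by (rule tp.f_notin)
  have cV: "card V = Suc s"
  proof -
    have "card V \<noteq> 0" using tp.finV tp.Vne by simp
    then show ?thesis using tp.cardE unfolding s_def by simp
  qed
  have cB: "card (E \<union> {f}) = Suc s" using fn tp.finE unfolding s_def by simp
  obtain h where h: "bij_betw h {0..<s} E" using ex_bij_betw_nat_finite[OF tp.finE] unfolding s_def by blast
  have hE: "h k \<in> E" if "k < s" for k using h that by (auto simp: bij_betw_def)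
  have hinj: "h a = h b \<Longrightarrow> a < s \<Longrightarrow> b < s \<Longrightarrow> a = b" for a b
    using h by (auto simp: bij_betw_def dest: inj_onD)
  define idx' where "idx' = (\<lambda>a. if a < s then h a else f)"
  have bij': "bij_betw idx' {0..<Suc s} (E \<union> {f})"
  proof (rule bij_betw_imageI)
    show "inj_on idx' {0..<Suc s}"
    proof (rule inj_onI)
      fix a b assume a: "a \<in> {0..<Suc s}" and b: "b \<in> {0..<Suc s}" and eq: "idx' a = idx' b"
      show "a = b"
      proof (cases "a < s"; cases "b < s")
        assume "a < s" "b < s" then show ?thesis using eq hinj unfolding idx'_def by auto
      next
        assume "a < s" "\<not> b < s" then show ?thesis using eq hE fn unfolding idx'_def by force
      next
        assume "\<not> a < s" "b < s" then show ?thesis using eq hE fn unfolding idx'_def by force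
      next
        assume "\<not> a < s" "\<not> b < s" then show ?thesis using a b by auto
      qed
    qed
    have "idx' ` {0..<Suc s} = idx' ` {0..<s} \<union> {idx' s}" by (auto simp: less_Suc_eq)
    also have "idx' ` {0..<s} = h ` {0..<s}" unfolding idx'_def by auto
    also have "h ` {0..<s} = E" using h by (simp add: bij_betw_def)
    finally show "idx' ` {0..<Suc s} = E \<union> {f}" unfolding idx'_def by simp
  qed
  define ent where "ent = min4pc_entry E"
  define c where "c = (\<lambda>k. ent f (h k))"
  define N where "N = min4pc_submatrix E (card (E \<union> {{i, j}})) idx"
  have N1: "N = mat (Suc s) (Suc s) (\<lambda>(a,b). ent (idx a) (idx b))"
    unfolding N_def min4pc_submatrix_def ent_def using cB f_def by simp
  have enum': "bij_betw idx {0..<Suc s} (E \<union> {f})" using enum cB f_def by simp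
  have cp1: "char_poly N = char_poly (mat (Suc s) (Suc s) (\<lambda>(a,b). ent (idx' a) (idx' b)))"
    unfolding N1 by (rule char_poly_reindex[OF enum' bij'])
  have N2: "mat (Suc s) (Suc s) (\<lambda>(a,b). ent (idx' a) (idx' b)) = Ncan s c"
  proof (rule eq_matI)
    fix a b assume a: "a < dim_row (Ncan s c)" and b: "b < dim_col (Ncan s c)"
    then have a': "a < Suc s" and b': "b < Suc s" unfolding Ncan_def by auto
    have "ent (idx' a) (idx' b) = (if a < s \<and> b < s then (if a = b then 0 else 2)
      else if a < s then c a else if b < s then c b else 0)"
    proof (cases "a < s"; cases "b < s")
      assume as: "a < s" and bs: "b < s"
      show ?thesis
      proof (cases "a = b")
        case True then show ?thesis using as bs tp.ent_diag[OF hE[OF as]] unfolding idx'_def ent_def by simp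
      next
        case False
        then have "h a \<noteq> h b" using hinj as bs by blast
        then show ?thesis using as bs False tp.ent_edges[OF hE[OF as] hE[OF bs]] unfolding idx'_def ent_def by simp
      qed
    next
      assume as: "a < s" and bs: "\<not> b < s"
      then show ?thesis using tp.ent_sym[OF hE[OF as]] unfolding idx'_def ent_def c_def f_def by simp
    next
      assume as: "\<not> a < s" and bs: "b < s"
      then show ?thesis unfolding idx'_def ent_def c_def f_def by simp
    next
      assume as: "\<not> a < s" and bs: "\<not> b < s"
      then show ?thesis using tp.ent_ff unfolding idx'_def ent_def f_def by simp
    qed
    then show "mat (Suc s) (Suc s) (\<lambda>(a,b). ent (idx' a) (idx' b)) $$ (a,b) = Ncan s c $$ (a,b)"
      using a' b' unfolding Ncan_def by simp
  qed (auto simp: Ncan_def)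
  have KE: "tp.Ks \<subseteq> E" unfolding tp.Ks_def by auto
  have cK: "card tp.Ks = D" unfolding D_def by (rule tp.card_Ks)
  have D2: "D \<ge> 2" using d unfolding D_def by simp
  have sD: "D \<le> s" using card_mono[OF tp.finE KE] cK unfolding s_def by simp
  then have s2: "s \<ge> 2" using D2 by simp
  define m where "m = s - D"
  have sm: "s = D + m" unfolding m_def using sD by simp
  have cEK: "card (E - tp.Ks) = m" using card_Diff_subset[OF finite_subset[OF KE tp.finE] KE] cK
    unfolding m_def s_def by simp
  have cval: "c k = (if h k \<in> tp.Ks then real D - 1 else real D + 1)" if "k < s" for k
    unfolding c_def ent_def f_def D_def using tp.ent_f_vals[OF hE[OF that]] by simp
  have sumgen: "(\<Sum>k\<in>{0..<s}. g (c k)) = real D * g (real D - 1) + real m * g (real D + 1)" for g :: "real \<Rightarrow> real"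
  proof -
    have "(\<Sum>k\<in>{0..<s}. g (c k)) = (\<Sum>k\<in>{0..<s}. (\<lambda>e. g (if e \<in> tp.Ks then real D - 1 else real D + 1)) (h k))"
      by (rule sum.cong) (auto simp: cval)
    also have "\<dots> = (\<Sum>e\<in>E. g (if e \<in> tp.Ks then real D - 1 else real D + 1))"
      by (rule sum.reindex_bij_betw[OF h])
    also have "\<dots> = (\<Sum>e\<in>E. if e \<in> tp.Ks then g (real D - 1) else g (real D + 1))"
      by (rule sum.cong) auto
    also have "\<dots> = (\<Sum>e\<in>E \<inter> {e. e \<in> tp.Ks}. g (real D - 1)) + (\<Sum>e\<in>E \<inter> - {e. e \<in> tp.Ks}. g (real D + 1))"
      by (rule sum.If_cases[OF tp.finE])
    also have "E \<inter> {e. e \<in> tp.Ks} = tp.Ks" using KE by auto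
    also have "E \<inter> - {e. e \<in> tp.Ks} = E - tp.Ks" by auto
    finally show ?thesis using cK cEK by simp
  qed
  define S1 where "S1 = (\<Sum>k\<in>{0..<s}. c k)"
  define S2 where "S2 = (\<Sum>k\<in>{0..<s}. c k * c k)"
  have S1v: "S1 = real D * (real D - 1) + real m * (real D + 1)" unfolding S1_def using sumgen[of "\<lambda>x. x"] by simp
  have S2v: "S2 = real D * ((real D - 1) * (real D - 1)) + real m * ((real D + 1) * (real D + 1))"
    unfolding S2_def using sumgen[of "\<lambda>x. x * x"] by simp
  define q where "q = [: 2 * (real s - 1) * S2 - 2 * S1 * S1, 4 - 4 * real s - S2, 4 - 2 * real s, 1 :]"
  have cpN: "char_poly N = [:-(-2),1:]^(s-2) * q"
    unfolding cp1 N2 q_def S1_def S2_def by (rule char_poly_Ncan[OF s2])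
  have rs: "real s = real D + real m" using sm by simp
  have q0: "poly q 0 < 0"
  proof -
    have e: "poly q 0 = - 2 * ((real D + real m) * ((real D - 1) * (real D - 1)))"
      unfolding q_def S1v S2v rs by (simp add: algebra_simps)
    have "(real D - 1) * (real D - 1) > 0" using D2 by simp
    moreover have "real D + real m > 0" using D2 by simp
    ultimately have "(real D + real m) * ((real D - 1) * (real D - 1)) > 0" by (rule mult_pos_pos[rotated])
    then show ?thesis using e by linarith
  qed
  have qm2: "poly q (-2) \<ge> 0"
  proof -
    have "poly q (-2) = 8 * real D * real m"
      unfolding q_def S1v S2v rs by (simp add: algebra_simps)
    then show ?thesis by simp
  qed
  have qr: "nroots (\<lambda>a. a < 0) q = 2 \<and> nroots (\<lambda>a. a > 0) q = 1"
    using cubic_roots[OF q0[unfolded q_def] qm2[unfolded q_def]] unfolding q_def .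
  have qnz: "q \<noteq> 0" unfolding q_def by simp
  have split: "nroots P (char_poly N) = nroots P ([:-(-2),1:]^(s-2)) + nroots P q" for P
    unfolding cpN by (rule nroots_mult) (use qnz in auto)
  have "num_neg_eigs N = nroots (\<lambda>a. a < 0) (char_poly N)" unfolding num_neg_eigs_def nroots_def by simp
  also have "\<dots> = (s - 2) + 2" using split[of "\<lambda>a. a < 0"] nroots_pow[of "\<lambda>a. a < 0" "-2" "s-2"] qr by simp
  also have "\<dots> = card V - 1" using s2 cV by simp
  finally have neg: "num_neg_eigs N = card V - 1" .
  have "num_pos_eigs N = nroots (\<lambda>a. a > 0) (char_poly N)" unfolding num_pos_eigs_def nroots_def by simp
  also have "\<dots> = 1" using split[of "\<lambda>a. a > 0"] nroots_pow[of "\<lambda>a. a > 0" "-2" "s-2"] qr by simp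
  finally have pos: "num_pos_eigs N = 1" .
  show ?thesis using neg pos unfolding N_def by blast
qed


end
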